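(* Let $\mathcal{R}$ be a cyclic proof system induced by a trace interpretation $\iota\colon\mathcal{R}\to\mathcal{T}_\mathcal{A}$, let $(C,\lambda,\delta)$ with $C=(T,\beta)$ be a proof in the reset proof system $\mathrm{R}(\mathcal{R})$, and let $\eta$ be a connected cycle of $C$. Then there exists $t\in\eta$ such that the invariant of the path from $\beta(t)$ to $t$ is a prefix of the invariant of the path from $\beta(s)$ to $s$ for every $s\in\eta$.
   Context: Activation algebras and $\mathcal{T}_\mathcal{A}$: an activation algebra $\mathcal{A}=(A,\le,\vee,0,\alpha)$ is a finite join-semilattice with least element $0$ and distinguished $\alpha\neq0$; $\mathcal{T}_\mathcal{A}$ has finite sets as objects and relations $R\subseteq X\times A\times Y$ as morphisms $X\to Y$. Cyclic trees: a tree is a nonempty prefix-closed $T\subseteq\omega^*$ ($\le$ prefix order, $\mathrm{Chld}(t)=\{ti\in T\}$, leaves = nodes without children). A cyclic tree $(T,\beta)$: finite tree $T$ and partial map $\beta$ from leaves to inner nodes with $\beta(t)<t$; $t\in\mathrm{dom}(\beta)$ are buds, $\beta(t)$ companions. A connected cycle is a set $\eta\subseteq\mathrm{dom}(\beta)$ such that (i) there is $b(\eta)\in\eta$ with $\beta(b(\eta))\le\beta(t)$ for all $t\in\eta$ and (ii) for every $t_0\in\eta$ there are $t_1,\dots,t_n\in\eta$ ($n\ge0$) with $\beta(t_i)\le t_{i+1}$ ($i<n$) and $t_n=b(\eta)$. Derivation systems and preproofs: a derivation system consists of a set $\textsc{Seq}$ of sequents, a set of rules and an interpretation assigning each rule $R$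 a tuple $(\Gamma,\Delta_1,\dots,\Delta_n)$ (conclusion, premises). A preproof is $(C,\lambda,\delta)$ with $C=(T,\beta)$ a cyclic tree, $\lambda\colon T\to\textsc{Seq}$ with $\lambda(t)=\lambda(\beta(t))$ for buds, and a partial $\delta$ from non-bud nodes to rules such that each non-bud $t$ either is a leaf not in $\mathrm{dom}(\delta)$ (open) or $\delta(t)$ has conclusion $\lambda(t)$ and premises $\lambda(t1),\dots,\lambda(tn)$ with $\mathrm{Chld}(t)=\{t1,\dots,tn\}$. A trace interpretation $\iota\colon\mathcal{R}\to\mathcal{T}_\mathcal{A}$ assigns each sequent $\Gamma$ an object $\iota(\Gamma)$ and each rule $R$ with conclusion $\Gamma$ and premises $\Delta_i$ morphisms $r_i\colon\iota(\Gamma)\to\iota(\Delta_i)$; the induced proof system has as proofs those preproofs without open leaves along whose every infinite branch the sequence of morphisms (identity at bud-to-companion steps) satisfies the trace condition of $\mathcal{T}_\mathcal{A}$. Safra boards: with a fixed countable chip set $\mathcal{C}\supseteq\omega$, a Safra board on a finite set $X$ is $(\Theta,\sigma)$ with $\Theta\subseteq\mathcal{C}$ finite and linearly ordered (the control) and $\sigma\colon X\times A\to\mathcal{P}(\mathcal{P}(\Theta))$, every chip lying in some stack $S\in\sigma(x,a)$; $\gamma$ is covered if it is the maximum of no stack. Weakening, population, $\gamma$-reset (for covered $\gamma$: replace every stack $S\ni\gamma$ by $\{z\in S\mid z\le\gamma\}$, keep the others, and drop chips no longer occurring) and $r$-successor transitions are as standard for Safra boards (defined as in the other statements of this collection). Reset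 proof system $\mathrm{R}(\mathcal{R})$: sequents are $\Gamma;(\Theta,\sigma)$ with $\Gamma$ an $\mathcal{R}$-sequent and $(\Theta,\sigma)$ a Safra board on $\iota(\Gamma)$ ($\Theta$ is its control). Rules: structural rules Weak, $\textsc{Reset}_\gamma$, Pop, each with conclusion $\Gamma;(\Theta,\sigma)$ and single premise $\Gamma;(\Theta',\sigma')$ where $(\Theta',\sigma')$ arises from $(\Theta,\sigma)$ by a weakening, a $\gamma$-reset, or a population respectively; and for every $\mathcal{R}$-rule $R$ (conclusion $\Gamma$, premises $\Delta_i$, maps $r_i$) and board $(\Theta,\sigma)$ on $\iota(\Gamma)$ a rule with conclusion $\Gamma;(\Theta,\sigma)$ and premises $\Delta_i;(\Theta_i,\sigma_i)$ where $(\Theta_i,\sigma_i)$ is an $r_i$-successor of $(\Theta,\sigma)$. For a bud $t$ of an $\mathrm{R}(\mathcal{R})$-preproof, consider the controls of the sequents on the path from $\beta(t)$ to $t$ and let $\Theta$ be their longest common prefix (as ordered sequences). An invariant of this path is a nonempty prefix $\theta$ of $\Theta$ such that a $\textsc{Reset}_{\max(\theta)}$ rule is applied on the path between $\beta(t)$ and $t$; "the invariant" means the longest such. An $\mathrm{R}(\mathcal{R})$-preproof without open leaves is a proof iff for every bud $t$ the path from $\beta(t)$ to $t$ has an invariant. *)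

theory Defs
  imports Main "HOL-Library.Sublist"
begin

definition children :: "nat list set \<Rightarrow> nat list \<Rightarrow> nat list set" where
  "children T t = {t @ [i] | i. t @ [i] \<in> T}"

definition is_leaf :: "nat list set \<Rightarrow> nat list \<Rightarrow> bool" where
  "is_leaf T t \<longleftrightarrow> t \<in> T \<and> children T t = {}"

definition is_inner :: "nat list set \<Rightarrow> nat list \<Rightarrow> bool" where
  "is_inner T t \<longleftrightarrow> t \<in> T \<and> children T t \<noteq> {}"

definition is_tree :: "nat list set \<Rightarrow> bool" where
  "is_tree T \<longleftrightarrow> T \<noteq> {} \<and> (\<forall>t\<in>T. \<forall>s. prefix s t \<longrightarrow> s \<in> T)"

definition cyclic_tree :: "nat list set \<Rightarrow> (nat list \<rightharpoonup> nat list) \<Rightarrow> bool" where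
  "cyclic_tree T \<beta> \<longleftrightarrow> is_tree T \<and> finite T \<and>
     (\<forall>t\<in>dom \<beta>. is_leaf T t \<and> is_inner T (the (\<beta> t)) \<and> strict_prefix (the (\<beta> t)) t)"

definition connected_cycle :: "(nat list \<rightharpoonup> nat list) \<Rightarrow> nat list set \<Rightarrow> bool" where
  "connected_cycle \<beta> \<eta> \<longleftrightarrow> \<eta> \<subseteq> dom \<beta> \<and>
     (\<exists>b\<in>\<eta>. (\<forall>t\<in>\<eta>. prefix (the (\<beta> b)) (the (\<beta> t))) \<and>
       (\<forall>t0\<in>\<eta>. \<exists>ts. ts \<noteq> [] \<and> hd ts = t0 \<and> last ts = b \<and> set ts \<subseteq> \<eta> \<and>
          (\<forall>i. Suc i < length ts \<longrightarrow> prefix (the (\<beta> (ts ! i))) (ts ! Suc i))))"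

text \<open>A control is a finite linearly ordered set of chips,
  represented as a list of distinct chips (list order = chip order).
  The activation algebra is a finite type of class bounded_semilattice_sup_bot
  (bot = 0, sup = join) with a distinguished element alpha different from bot.\<close>

type_synonym ('x, 'a) board = "nat list \<times> ('x \<Rightarrow> 'a \<Rightarrow> nat set set)"

definition chip_le :: "nat list \<Rightarrow> nat \<Rightarrow> nat \<Rightarrow> bool" where
  "chip_le \<Theta> z g \<longleftrightarrow> (\<exists>i j. i \<le> j \<and> j < length \<Theta> \<and> \<Theta> ! i = z \<and> \<Theta> ! j = g)"

definition occurring :: "('x \<Rightarrow> 'a \<Rightarrow> nat set set) \<Rightarrow> nat set" where
  "occurring \<sigma> = {g. \<exists>x a S. S \<in> \<sigma> x a \<and> g \<in> S}"

definition trim :: "nat list \<Rightarrow> ('x \<Rightarrow> 'a \<Rightarrow> nat set set) \<Rightarrow> nat list" where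
  "trim \<Theta> \<sigma> = filter (\<lambda>g. g \<in> occurring \<sigma>) \<Theta>"

definition safra_board :: "'x set \<Rightarrow> ('x, 'a) board \<Rightarrow> bool" where
  "safra_board X B \<longleftrightarrow> (case B of (\<Theta>, \<sigma>) \<Rightarrow>
     distinct \<Theta> \<and> (\<forall>x a. x \<notin> X \<longrightarrow> \<sigma> x a = {}) \<and>
     (\<forall>x a S. S \<in> \<sigma> x a \<longrightarrow> S \<subseteq> set \<Theta>) \<and> set \<Theta> \<subseteq> occurring \<sigma>)"

definition is_stack_max :: "nat list \<Rightarrow> nat set \<Rightarrow> nat \<Rightarrow> bool" where
  "is_stack_max \<Theta> S g \<longleftrightarrow> g \<in> S \<and> (\<forall>z\<in>S. chip_le \<Theta> z g)"

definition covered :: "('x, 'a) board \<Rightarrow> nat \<Rightarrow> bool" where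
  "covered B g \<longleftrightarrow> (case B of (\<Theta>, \<sigma>) \<Rightarrow>
     g \<in> set \<Theta> \<and> \<not> (\<exists>x a S. S \<in> \<sigma> x a \<and> is_stack_max \<Theta> S g))"

definition weakening :: "('x, 'a) board \<Rightarrow> ('x, 'a) board \<Rightarrow> bool" where
  "weakening B B' \<longleftrightarrow> (case B of (\<Theta>, \<sigma>) \<Rightarrow> case B' of (\<Theta>', \<sigma>') \<Rightarrow>
     (\<forall>x a. \<sigma>' x a \<subseteq> \<sigma> x a) \<and> \<Theta>' = trim \<Theta> \<sigma>')"

definition reset :: "nat \<Rightarrow> ('x, 'a) board \<Rightarrow> ('x, 'a) board \<Rightarrow> bool" where
  "reset g B B' \<longleftrightarrow> (case B of (\<Theta>, \<sigma>) \<Rightarrow> case B' of (\<Theta>', \<sigma>') \<Rightarrow>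
     covered B g \<and>
     \<sigma>' = (\<lambda>x a. (\<lambda>S. if g \<in> S then {z \<in> S. chip_le \<Theta> z g} else S) ` \<sigma> x a) \<and>
     \<Theta>' = trim \<Theta> \<sigma>')"

definition population :: "'a::bounded_semilattice_sup_bot \<Rightarrow> 'x set \<Rightarrow> ('x, 'a) board \<Rightarrow> ('x, 'a) board \<Rightarrow> bool" where
  "population \<alpha> X B B' \<longleftrightarrow> (case B of (\<Theta>, \<sigma>) \<Rightarrow> case B' of (\<Theta>', \<sigma>') \<Rightarrow>
     (\<exists>g. g \<notin> set \<Theta> \<and> \<Theta>' = \<Theta> @ [g] \<and>
       \<sigma>' = (\<lambda>x a. if x \<in> X then
               \<sigma> x a \<union> (if a = bot then {S \<union> {g} | S b. S \<in> \<sigma> x b \<and> \<alpha> \<le> b} \<union> {{g}} else {})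
             else {})))"

definition successor :: "('x \<times> 'a::bounded_semilattice_sup_bot \<times> 'x) set \<Rightarrow> ('x, 'a) board \<Rightarrow> ('x, 'a) board \<Rightarrow> bool" where
  "successor r B B' \<longleftrightarrow> (case B of (\<Theta>, \<sigma>) \<Rightarrow> case B' of (\<Theta>', \<sigma>') \<Rightarrow>
     \<sigma>' = (\<lambda>y b. {S. \<exists>x a c. (x, c, y) \<in> r \<and> S \<in> \<sigma> x a \<and> b = sup a c}) \<and>
     \<Theta>' = trim \<Theta> \<sigma>')"

text \<open>A derivation system is given by types of sequents 's and rules 'r and an
  interpretation (concl, prems).\<close>

definition trace_interpretation ::
  "('r \<Rightarrow> 's) \<Rightarrow> ('r \<Rightarrow> 's list) \<Rightarrow> ('s \<Rightarrow> 'x set) \<Rightarrow> ('r \<Rightarrow> nat \<Rightarrow> ('x \<times> 'a \<times> 'x) set) \<Rightarrow> bool" where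
  "trace_interpretation concl prems obj mor \<longleftrightarrow>
     (\<forall>\<Gamma>. finite (obj \<Gamma>)) \<and>
     (\<forall>R i. i < length (prems R) \<longrightarrow> mor R i \<subseteq> obj (concl R) \<times> UNIV \<times> obj (prems R ! i))"

datatype ('s, 'x, 'a, 'r) rrule =
    RWeak 's "('x, 'a) board" "('x, 'a) board"
  | RReset nat 's "('x, 'a) board" "('x, 'a) board"
  | RPop 's "('x, 'a) board" "('x, 'a) board"
  | RLift 'r "('x, 'a) board" "('x, 'a) board list"

type_synonym ('s, 'x, 'a) rseq = "'s \<times> ('x, 'a) board"

definition rr_sequent :: "('s \<Rightarrow> 'x set) \<Rightarrow> ('s, 'x, 'a) rseq \<Rightarrow> bool" where
  "rr_sequent obj G \<longleftrightarrow> safra_board (obj (fst G)) (snd G)"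

fun rr_concl :: "('r \<Rightarrow> 's) \<Rightarrow> ('s, 'x, 'a, 'r) rrule \<Rightarrow> ('s, 'x, 'a) rseq" where
  "rr_concl concl (RWeak \<Gamma> B B') = (\<Gamma>, B)"
| "rr_concl concl (RReset g \<Gamma> B B') = (\<Gamma>, B)"
| "rr_concl concl (RPop \<Gamma> B B') = (\<Gamma>, B)"
| "rr_concl concl (RLift R B Bs) = (concl R, B)"

fun rr_prems :: "('r \<Rightarrow> 's list) \<Rightarrow> ('s, 'x, 'a, 'r) rrule \<Rightarrow> ('s, 'x, 'a) rseq list" where
  "rr_prems prems (RWeak \<Gamma> B B') = [(\<Gamma>, B')]"
| "rr_prems prems (RReset g \<Gamma> B B') = [(\<Gamma>, B')]"
| "rr_prems prems (RPop \<Gamma> B B') = [(\<Gamma>, B')]"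
| "rr_prems prems (RLift R B Bs) = zip (prems R) Bs"

fun rr_rule :: "'a::bounded_semilattice_sup_bot \<Rightarrow> ('r \<Rightarrow> 's) \<Rightarrow> ('r \<Rightarrow> 's list) \<Rightarrow> ('s \<Rightarrow> 'x set) \<Rightarrow>
    ('r \<Rightarrow> nat \<Rightarrow> ('x \<times> 'a \<times> 'x) set) \<Rightarrow> ('s, 'x, 'a, 'r) rrule \<Rightarrow> bool" where
  "rr_rule \<alpha> concl prems obj mor (RWeak \<Gamma> B B') \<longleftrightarrow>
     safra_board (obj \<Gamma>) B \<and> safra_board (obj \<Gamma>) B' \<and> weakening B B'"
| "rr_rule \<alpha> concl prems obj mor (RReset g \<Gamma> B B') \<longleftrightarrow>
     safra_board (obj \<Gamma>) B \<and> safra_board (obj \<Gamma>) B' \<and> reset g B B'"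
| "rr_rule \<alpha> concl prems obj mor (RPop \<Gamma> B B') \<longleftrightarrow>
     safra_board (obj \<Gamma>) B \<and> safra_board (obj \<Gamma>) B' \<and> population \<alpha> (obj \<Gamma>) B B'"
| "rr_rule \<alpha> concl prems obj mor (RLift R B Bs) \<longleftrightarrow>
     safra_board (obj (concl R)) B \<and> length Bs = length (prems R) \<and>
     (\<forall>i < length Bs. safra_board (obj (prems R ! i)) (Bs ! i) \<and> successor (mor R i) B (Bs ! i))"

definition rr_preproof :: "'a::bounded_semilattice_sup_bot \<Rightarrow> ('r \<Rightarrow> 's) \<Rightarrow> ('r \<Rightarrow> 's list) \<Rightarrow> ('s \<Rightarrow> 'x set) \<Rightarrow>
    ('r \<Rightarrow> nat \<Rightarrow> ('x \<times> 'a \<times> 'x) set) \<Rightarrow> nat list set \<Rightarrow> (nat list \<rightharpoonup> nat list) \<Rightarrow>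
    (nat list \<Rightarrow> ('s, 'x, 'a) rseq) \<Rightarrow> (nat list \<rightharpoonup> ('s, 'x, 'a, 'r) rrule) \<Rightarrow> bool" where
  "rr_preproof \<alpha> concl prems obj mor T \<beta> lab \<delta> \<longleftrightarrow>
     cyclic_tree T \<beta> \<and>
     (\<forall>t\<in>T. rr_sequent obj (lab t)) \<and>
     (\<forall>t\<in>dom \<beta>. lab t = lab (the (\<beta> t))) \<and>
     dom \<delta> \<subseteq> T - dom \<beta> \<and>
     (\<forall>t\<in>T - dom \<beta>. (is_leaf T t \<and> \<delta> t = None) \<or>
        (\<exists>\<rho>. \<delta> t = Some \<rho> \<and> rr_rule \<alpha> concl prems obj mor \<rho> \<and> rr_concl concl \<rho> = lab t \<and>
             children T t = {t @ [i] | i. i < length (rr_prems prems \<rho>)} \<and>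
             (\<forall>i < length (rr_prems prems \<rho>). lab (t @ [i]) = rr_prems prems \<rho> ! i)))"

definition control :: "(nat list \<Rightarrow> ('s, 'x, 'a) rseq) \<Rightarrow> nat list \<Rightarrow> nat list" where
  "control lab u = fst (snd (lab u))"

definition path_nodes :: "(nat list \<rightharpoonup> nat list) \<Rightarrow> nat list \<Rightarrow> nat list set" where
  "path_nodes \<beta> t = {u. prefix (the (\<beta> t)) u \<and> prefix u t}"

definition path_lcp :: "(nat list \<rightharpoonup> nat list) \<Rightarrow> (nat list \<Rightarrow> ('s, 'x, 'a) rseq) \<Rightarrow> nat list \<Rightarrow> nat list" where
  "path_lcp \<beta> lab t = arg_max length (\<lambda>p. \<forall>u\<in>path_nodes \<beta> t. prefix p (control lab u))"

definition is_invariant :: "(nat list \<rightharpoonup> nat list) \<Rightarrow> (nat list \<Rightarrow> ('s, 'x, 'a) rseq) \<Rightarrow>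
    (nat list \<rightharpoonup> ('s, 'x, 'a, 'r) rrule) \<Rightarrow> nat list \<Rightarrow> nat list \<Rightarrow> bool" where
  "is_invariant \<beta> lab \<delta> t \<theta> \<longleftrightarrow> \<theta> \<noteq> [] \<and> prefix \<theta> (path_lcp \<beta> lab t) \<and>
     (\<exists>u\<in>path_nodes \<beta> t. \<exists>\<Gamma> B B'. \<delta> u = Some (RReset (last \<theta>) \<Gamma> B B'))"

definition the_invariant :: "(nat list \<rightharpoonup> nat list) \<Rightarrow> (nat list \<Rightarrow> ('s, 'x, 'a) rseq) \<Rightarrow>
    (nat list \<rightharpoonup> ('s, 'x, 'a, 'r) rrule) \<Rightarrow> nat list \<Rightarrow> nat list" where
  "the_invariant \<beta> lab \<delta> t = arg_max length (is_invariant \<beta> lab \<delta> t)"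

definition rr_proof :: "'a::bounded_semilattice_sup_bot \<Rightarrow> ('r \<Rightarrow> 's) \<Rightarrow> ('r \<Rightarrow> 's list) \<Rightarrow> ('s \<Rightarrow> 'x set) \<Rightarrow>
    ('r \<Rightarrow> nat \<Rightarrow> ('x \<times> 'a \<times> 'x) set) \<Rightarrow> nat list set \<Rightarrow> (nat list \<rightharpoonup> nat list) \<Rightarrow>
    (nat list \<Rightarrow> ('s, 'x, 'a) rseq) \<Rightarrow> (nat list \<rightharpoonup> ('s, 'x, 'a, 'r) rrule) \<Rightarrow> bool" where
  "rr_proof \<alpha> concl prems obj mor T \<beta> lab \<delta> \<longleftrightarrow>
     rr_preproof \<alpha> concl prems obj mor T \<beta> lab \<delta> \<and>
     (\<forall>t\<in>T - dom \<beta>. \<delta> t \<noteq> None) \<and>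
     (\<forall>t\<in>dom \<beta>. \<exists>\<theta>. is_invariant \<beta> lab \<delta> t \<theta>)"

end

theory Submission
  imports Defs
begin

lemma argmax_bounded:
  assumes "P k" and "\<And>y. P y \<Longrightarrow> (f::'b \<Rightarrow> nat) y < b"
  shows "P (arg_max f P)"
proof -
  obtain x where x: "P x" "\<forall>y. P y \<longrightarrow> f y \<le> f x"
    using ex_has_greatest_nat[of P k f b] assms by blast
  show ?thesis
    by (rule arg_maxI[where P=P and f=f and x=x]) (use x in auto)
qed

lemma lcp_prefix:
  assumes "strict_prefix (the (\<beta> t)) t" "u \<in> path_nodes \<beta> t"
  shows "prefix (path_lcp \<beta> lab t) (control lab u)"
proof -
  let ?P = "\<lambda>p. \<forall>u\<in>path_nodes \<beta> t. prefix p (control lab u)"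
  have tin: "t \<in> path_nodes \<beta> t" using assms(1) by (simp add: path_nodes_def)
  have "?P (arg_max length ?P)"
  proof (rule argmax_bounded[where k="[]" and b="Suc (length (control lab t))"])
    show "?P []" by simp
    fix y assume "?P y"
    then have "prefix y (control lab t)" using tin by blast
    then show "length y < Suc (length (control lab t))" using prefix_length_le by fastforce
  qed
  then show ?thesis using assms(2) unfolding path_lcp_def by blast
qed

lemma inv_prefix:
  assumes "strict_prefix (the (\<beta> t)) t" "u \<in> path_nodes \<beta> t"
    and "\<exists>\<theta>. is_invariant \<beta> lab \<delta> t \<theta>"
  shows "prefix (the_invariant \<beta> lab \<delta> t) (control lab u)"
proof -
  obtain k where k: "is_invariant \<beta> lab \<delta> t k" using assms(3) by blast
  have "is_invariant \<beta> lab \<delta> t (arg_max length (is_invariant \<beta> lab \<delta> t))"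
  proof (rule argmax_bounded[where k=k and b="Suc (length (path_lcp \<beta> lab t))"])
    show "is_invariant \<beta> lab \<delta> t k" by (rule k)
    fix y assume "is_invariant \<beta> lab \<delta> t y"
    then have "prefix y (path_lcp \<beta> lab t)" by (simp add: is_invariant_def)
    then show "length y < Suc (length (path_lcp \<beta> lab t))" using prefix_length_le by fastforce
  qed
  then have "prefix (the_invariant \<beta> lab \<delta> t) (path_lcp \<beta> lab t)"
    by (simp add: is_invariant_def the_invariant_def)
  then show ?thesis using lcp_prefix[OF assms(1,2)] by (rule prefix_order.trans)
qed

lemma chain_cover:
  fixes R :: "nat list \<Rightarrow> nat list \<Rightarrow> bool"
  assumes R: "\<And>s x u. s \<in> \<eta> \<Longrightarrow> x \<in> \<eta> \<Longrightarrow> u \<in> path_nodes \<beta> s \<Longrightarrow> u \<in> path_nodes \<beta> x \<Longrightarrow> R s x"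
    and sp: "\<And>x. x \<in> \<eta> \<Longrightarrow> strict_prefix (the (\<beta> x)) x"
    and bb: "\<And>x. x \<in> \<eta> \<Longrightarrow> prefix (the (\<beta> b)) (the (\<beta> x))"
  shows "ts \<noteq> [] \<Longrightarrow> last ts = b \<Longrightarrow> set ts \<subseteq> \<eta> \<Longrightarrow>
     (\<forall>i. Suc i < length ts \<longrightarrow> prefix (the (\<beta> (ts ! i))) (ts ! Suc i)) \<Longrightarrow>
     (\<forall>s\<in>set ts. R\<^sup>*\<^sup>* b s) \<and>
     (\<forall>u. prefix (the (\<beta> b)) u \<and> prefix u (hd ts) \<longrightarrow> (\<exists>s\<in>set ts. u \<in> path_nodes \<beta> s))"
proof (induction ts)
  case Nil then show ?case by simp
next
  case (Cons x ys)
  show ?case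
  proof (cases "ys = []")
    case True
    then have xb: "x = b" using Cons.prems by simp
    have "prefix u b" if "prefix (the (\<beta> b)) u \<and> prefix u b" for u using that by blast
    then show ?thesis using xb True by (auto simp: path_nodes_def)
  next
    case False
    have ch: "\<forall>i. Suc i < length ys \<longrightarrow> prefix (the (\<beta> (ys ! i))) (ys ! Suc i)"
      using Cons.prems(4) by (metis Suc_less_eq length_Cons nth_Cons_Suc)
    have IH: "(\<forall>s\<in>set ys. R\<^sup>*\<^sup>* b s) \<and>
     (\<forall>u. prefix (the (\<beta> b)) u \<and> prefix u (hd ys) \<longrightarrow> (\<exists>s\<in>set ys. u \<in> path_nodes \<beta> s))"
      using Cons.IH False Cons.prems ch by auto
    have xe: "x \<in> \<eta>" using Cons.prems by auto
    have ye: "set ys \<subseteq> \<eta>" using Cons.prems by auto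
    have bx: "prefix (the (\<beta> x)) (hd ys)"
      using Cons.prems(4)[rule_format, of 0] False by (simp add: hd_conv_nth)
    have b1: "prefix (the (\<beta> b)) (the (\<beta> x))" using bb xe .
    obtain s where s: "s \<in> set ys" "the (\<beta> x) \<in> path_nodes \<beta> s"
      using IH bx b1 by blast
    have bxp: "the (\<beta> x) \<in> path_nodes \<beta> x" using sp[OF xe]
      by (simp add: path_nodes_def)
    have "R s x" using R[OF _ xe s(2) bxp] s(1) ye by blast
    then have Rx: "R\<^sup>*\<^sup>* b x" using IH s(1) by (meson rtranclp.rtrancl_into_rtrancl)
    have cov: "\<exists>s\<in>set (x # ys). u \<in> path_nodes \<beta> s"
      if u: "prefix (the (\<beta> b)) u" "prefix u x" for u
    proof -
      have "prefix (the (\<beta> x)) x" using sp[OF xe] by simp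
      then consider "prefix u (the (\<beta> x))" | "prefix (the (\<beta> x)) u"
        using prefix_same_cases u(2) by blast
      then show ?thesis
      proof cases
        case 1
        then have "prefix u (hd ys)" using bx by (rule prefix_order.trans)
        then show ?thesis using IH u(1) by auto
      next
        case 2
        then show ?thesis using u(2) by (auto simp: path_nodes_def)
      qed
    qed
    have A: "\<forall>s\<in>set (x # ys). R\<^sup>*\<^sup>* b s" using IH Rx by simp
    have B: "\<forall>u. prefix (the (\<beta> b)) u \<and> prefix u (hd (x # ys)) \<longrightarrow> (\<exists>s\<in>set (x # ys). u \<in> path_nodes \<beta> s)"
      using cov by simp
    show ?thesis using A B by (rule conjI)
  qed
qed

lemma min_prefix:
  fixes R :: "'c \<Rightarrow> 'c \<Rightarrow> bool" and f :: "'c \<Rightarrow> nat list"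
  assumes "R\<^sup>*\<^sup>* m x"
    and comp: "\<And>y z. R y z \<Longrightarrow> prefix (f y) (f z) \<or> prefix (f z) (f y)"
    and len: "\<And>z. length (f m) \<le> length (f z)"
  shows "prefix (f m) (f x)"
  using assms(1)
proof (induction rule: rtranclp_induct)
  case base then show ?case by simp
next
  case (step y z)
  from comp[OF step(2)] show ?case
  proof
    assume "prefix (f y) (f z)" then show ?thesis using step(3) by (rule prefix_order.trans[rotated])
  next
    assume "prefix (f z) (f y)"
    then show ?thesis using step(3) len[of z] prefix_length_prefix by blast
  qed
qed

theorem mainTheorem8:
  fixes \<alpha> :: "'a::{finite, bounded_semilattice_sup_bot}"
    and concl :: "'r \<Rightarrow> 's" and prems :: "'r \<Rightarrow> 's list"
    and obj :: "'s \<Rightarrow> 'x set" and mor :: "'r \<Rightarrow> nat \<Rightarrow> ('x \<times> 'a \<times> 'x) set"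
    and T :: "nat list set" and \<beta> :: "nat list \<rightharpoonup> nat list"
    and lab :: "nat list \<Rightarrow> ('s, 'x, 'a) rseq" and \<delta> :: "nat list \<rightharpoonup> ('s, 'x, 'a, 'r) rrule"
    and \<eta> :: "nat list set"
  assumes "\<alpha> \<noteq> bot"
    and "trace_interpretation concl prems obj mor"
    and "rr_proof \<alpha> concl prems obj mor T \<beta> lab \<delta>"
    and "connected_cycle \<beta> \<eta>"
  shows "\<exists>t\<in>\<eta>. \<forall>s\<in>\<eta>. prefix (the_invariant \<beta> lab \<delta> t) (the_invariant \<beta> lab \<delta> s)"
proof -
  let ?f = "the_invariant \<beta> lab \<delta>"
  define R where "R = (\<lambda>s x. s \<in> \<eta> \<and> x \<in> \<eta> \<and> (\<exists>u. u \<in> path_nodes \<beta> s \<and> u \<in> path_nodes \<beta> x))"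
  have etad: "\<eta> \<subseteq> dom \<beta>" using assms(4) by (simp add: connected_cycle_def)
  have ex: "\<exists>b\<in>\<eta>. (\<forall>t\<in>\<eta>. prefix (the (\<beta> b)) (the (\<beta> t))) \<and>
       (\<forall>t0\<in>\<eta>. \<exists>ts. ts \<noteq> [] \<and> hd ts = t0 \<and> last ts = b \<and> set ts \<subseteq> \<eta> \<and>
          (\<forall>i. Suc i < length ts \<longrightarrow> prefix (the (\<beta> (ts ! i))) (ts ! Suc i)))"
    using assms(4) unfolding connected_cycle_def by (rule conjunct2)
  then obtain b where b1: "b \<in> \<eta>" and b23: "(\<forall>t\<in>\<eta>. prefix (the (\<beta> b)) (the (\<beta> t))) \<and>
       (\<forall>t0\<in>\<eta>. \<exists>ts. ts \<noteq> [] \<and> hd ts = t0 \<and> last ts = b \<and> set ts \<subseteq> \<eta> \<and>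
          (\<forall>i. Suc i < length ts \<longrightarrow> prefix (the (\<beta> (ts ! i))) (ts ! Suc i)))"
    by (rule bexE)
  note b = b1 conjunct1[OF b23] conjunct2[OF b23]
  have sp: "strict_prefix (the (\<beta> x)) x" if "x \<in> \<eta>" for x
  proof -
    have "cyclic_tree T \<beta>" using assms(3) unfolding rr_proof_def rr_preproof_def by simp
    then show ?thesis using etad that unfolding cyclic_tree_def by blast
  qed
  have hasinv: "\<exists>\<theta>. is_invariant \<beta> lab \<delta> x \<theta>" if "x \<in> \<eta>" for x
  proof -
    have "\<forall>t\<in>dom \<beta>. \<exists>\<theta>. is_invariant \<beta> lab \<delta> t \<theta>" using assms(3) unfolding rr_proof_def by simp
    then show ?thesis using etad that by blast
  qed
  have reach: "R\<^sup>*\<^sup>* b x" if xin: "x \<in> \<eta>" for x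
  proof -
    obtain ts where tsall: "ts \<noteq> [] \<and> hd ts = x \<and> last ts = b \<and> set ts \<subseteq> \<eta> \<and>
      (\<forall>i. Suc i < length ts \<longrightarrow> prefix (the (\<beta> (ts ! i))) (ts ! Suc i))"
      using bspec[OF b(3) xin] by (rule exE)
    have ts: "ts \<noteq> []" "hd ts = x" "last ts = b" "set ts \<subseteq> \<eta>"
      "\<forall>i. Suc i < length ts \<longrightarrow> prefix (the (\<beta> (ts ! i))) (ts ! Suc i)"
      using tsall by auto
    have Ri: "R s x" if "s \<in> \<eta>" "x \<in> \<eta>" "u \<in> path_nodes \<beta> s" "u \<in> path_nodes \<beta> x" for s x u
      using that unfolding R_def by blast
    have "(\<forall>s\<in>set ts. R\<^sup>*\<^sup>* b s) \<and>
     (\<forall>u. prefix (the (\<beta> b)) u \<and> prefix u (hd ts) \<longrightarrow> (\<exists>s\<in>set ts. u \<in> path_nodes \<beta> s))"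
      by (rule chain_cover[where \<eta>=\<eta> and \<beta>=\<beta> and R=R and b=b])
        (use Ri sp b(2) ts in auto)
    then have "\<forall>s\<in>set ts. R\<^sup>*\<^sup>* b s" by (rule conjunct1)
    then show ?thesis using ts(1,2) by auto
  qed
  have Rsym: "R y z \<Longrightarrow> R z y" for y z unfolding R_def by blast
  have reach2: "R\<^sup>*\<^sup>* x b" if "x \<in> \<eta>" for x
  proof -
    have "R\<^sup>*\<^sup>* b x" using reach that .
    then show ?thesis
    proof (induction rule: rtranclp_induct)
      case base then show ?case by simp
    next
      case (step y z) then show ?case
        by (meson Rsym converse_rtranclp_into_rtranclp)
    qed
  qed
  have comp: "prefix (?f y) (?f z) \<or> prefix (?f z) (?f y)" if Ryz: "R y z" for y z
  proof -
    obtain u where u: "y \<in> \<eta>" "z \<in> \<eta>" "u \<in> path_nodes \<beta> y" "u \<in> path_nodes \<beta> z"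
      using Ryz unfolding R_def by blast
    have "prefix (?f y) (control lab u)" using inv_prefix[OF sp[OF u(1)] u(3) hasinv[OF u(1)]] .
    moreover have "prefix (?f z) (control lab u)" using inv_prefix[OF sp[OF u(2)] u(4) hasinv[OF u(2)]] .
    ultimately show ?thesis using prefix_same_cases by blast
  qed
  obtain m where m: "m \<in> \<eta>" "\<forall>y. y \<in> \<eta> \<longrightarrow> length (?f m) \<le> length (?f y)"
    using ex_has_least_nat[of "\<lambda>x. x \<in> \<eta>" b "\<lambda>x. length (?f x)"] b(1) by blast
  define g where "g = (\<lambda>x. if x \<in> \<eta> then ?f x else ?f m)"
  have "prefix (g m) (g s)" if "s \<in> \<eta>" for s
  proof (rule min_prefix[where R=R and f=g and m=m and x=s])
    show "R\<^sup>*\<^sup>* m s" using reach2[OF m(1)] reach[OF that] by (rule rtranclp_trans)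
    show "prefix (g y) (g z) \<or> prefix (g z) (g y)" if "R y z" for y z
      using comp[OF that] that unfolding g_def R_def by auto
    show "length (g m) \<le> length (g z)" for z using m unfolding g_def by auto
  qed
  then show ?thesis using m(1) unfolding g_def by (metis)
qed

end
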